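(* There exists a constant $L>0$ depending only on $\eta$ such that the following holds. Let $\gamma=(\gamma_1,\dots,\gamma_N)$ with $\gamma_i\in[0,p_i]$ for all $i$, and suppose $$\sum_{i:\,p_i>0}\frac{\gamma_i^4}{p_i^2}\le\frac{L}{n^2}.$$ Then for every $\rho\le\|\gamma\|_t$ we have $R^*_\rho\ge\eta$.
   Context: Binomial model: $N\ge2$, $n\ge2$ even. For $q\in[0,1]^N$ one observes $X_1,\dots,X_n$ i.i.d. in $\{0,1\}^N$ with mutually independent coordinates $X_l(j)\sim\mathrm{Ber}(q_j)$; $\mathbb P_q$ is their joint law. $\|x\|_t=(\sum_j|x_j|^t)^{1/t}$, $t\in[1,2]$. Known $p\in[0,1]^N$ with $\max_jp_j\le1/2$; $\eta\in(0,1)$. For a test $\psi:(\{0,1\}^N)^n\to\{0,1\}$, $R_\rho(\psi)=\mathbb P_p(\psi=1)+\sup_{q\in[0,1]^N:\|p-q\|_t\ge\rho}\mathbb P_q(\psi=0)$, and $R^*_\rho=\inf_\psi R_\rho(\psi)$. *)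

theory Defs
  imports "HOL-Analysis.Analysis"
begin

text \<open>Vectors in R^N are functions nat => real, only indices j < N matter.
  A sample (X_1,...,X_n) in ({0,1}^N)^n is a function X :: nat => nat => bool,
  X l j = coordinate j of observation l (l < n, j < N), False outside the range.\<close>

definition tnorm :: "nat \<Rightarrow> real \<Rightarrow> (nat \<Rightarrow> real) \<Rightarrow> real" where
  "tnorm N t x = (\<Sum>j<N. \<bar>x j\<bar> powr t) powr (1 / t)"

definition sample_space :: "nat \<Rightarrow> nat \<Rightarrow> (nat \<Rightarrow> nat \<Rightarrow> bool) set" where
  "sample_space N n = {X. \<forall>l j. (n \<le> l \<or> N \<le> j) \<longrightarrow> X l j = False}"

definition sample_prob :: "nat \<Rightarrow> nat \<Rightarrow> (nat \<Rightarrow> real) \<Rightarrow> (nat \<Rightarrow> nat \<Rightarrow> bool) \<Rightarrow> real" where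
  "sample_prob N n q X = (\<Prod>l<n. \<Prod>j<N. if X l j then q j else 1 - q j)"

definition test_prob :: "nat \<Rightarrow> nat \<Rightarrow> (nat \<Rightarrow> real) \<Rightarrow> ((nat \<Rightarrow> nat \<Rightarrow> bool) \<Rightarrow> bool) \<Rightarrow> bool \<Rightarrow> real" where
  "test_prob N n q psi b = (\<Sum>X\<in>sample_space N n. if psi X = b then sample_prob N n q X else 0)"

definition risk :: "nat \<Rightarrow> nat \<Rightarrow> real \<Rightarrow> (nat \<Rightarrow> real) \<Rightarrow> real \<Rightarrow> ((nat \<Rightarrow> nat \<Rightarrow> bool) \<Rightarrow> bool) \<Rightarrow> real" where
  "risk N n t p \<rho> psi = test_prob N n p psi True
     + (SUP q\<in>{q. (\<forall>j<N. 0 \<le> q j \<and> q j \<le> 1) \<and> tnorm N t (\<lambda>j. p j - q j) \<ge> \<rho>}. test_prob N n q psi False)"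

definition minimax_risk :: "nat \<Rightarrow> nat \<Rightarrow> real \<Rightarrow> (nat \<Rightarrow> real) \<Rightarrow> real \<Rightarrow> real" where
  "minimax_risk N n t p \<rho> = (INF psi. risk N n t p \<rho> psi)"

end

theory Submission
  imports Defs
begin

lemma sum_UNIV_bool: "(\<Sum>b\<in>(UNIV::bool set). g b) = g True + (g False :: real)"
  by (simp add: UNIV_bool)

definition emb :: "nat \<Rightarrow> nat \<Rightarrow> (nat \<times> nat \<Rightarrow> bool) \<Rightarrow> nat \<Rightarrow> nat \<Rightarrow> bool" where
  "emb N n h = (\<lambda>l j. if l < n \<and> j < N then h (l, j) else False)"

lemma S_image: "sample_space N n = emb N n ` PiE ({..<n}\<times>{..<N}) (\<lambda>_. UNIV)"
proof (intro equalityI subsetI)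
  fix X assume X: "X \<in> sample_space N n"
  let ?h = "restrict (\<lambda>(l,j). X l j) ({..<n}\<times>{..<N})"
  have "X = emb N n ?h"
    using X by (auto simp: emb_def sample_space_def fun_eq_iff)
  moreover have "?h \<in> PiE ({..<n}\<times>{..<N}) (\<lambda>_. UNIV)" by auto
  ultimately show "X \<in> emb N n ` PiE ({..<n}\<times>{..<N}) (\<lambda>_. UNIV)" by blast
next
  fix X assume "X \<in> emb N n ` PiE ({..<n}\<times>{..<N}) (\<lambda>_. UNIV)"
  then show "X \<in> sample_space N n" by (auto simp: emb_def sample_space_def)
qed

lemma inj_emb: "inj_on (emb N n) (PiE ({..<n}\<times>{..<N}) (\<lambda>_. UNIV))"
proof (rule inj_onI)
  fix x y assume x: "x \<in> PiE ({..<n}\<times>{..<N}) (\<lambda>_. UNIV)" and y: "y \<in> PiE ({..<n}\<times>{..<N}) (\<lambda>_. UNIV)"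
    and e: "emb N n x = emb N n y"
  show "x = y"
  proof (rule PiE_ext[OF x y])
    fix i assume i: "i \<in> {..<n}\<times>{..<N}"
    obtain l j where ij: "i = (l,j)" by force
    have "emb N n x l j = emb N n y l j" using e by simp
    then show "x i = y i" using i ij by (simp add: emb_def)
  qed
qed

lemma finite_S: "finite (sample_space N n)"
  by (simp add: S_image finite_PiE)

lemma key_S:
  fixes f :: "nat \<Rightarrow> nat \<Rightarrow> bool \<Rightarrow> real"
  shows "(\<Sum>X\<in>sample_space N n. \<Prod>l<n. \<Prod>j<N. f l j (X l j))
       = (\<Prod>l<n. \<Prod>j<N. f l j True + f l j False)"
proof -
  let ?I = "{..<n}\<times>{..<N}"
  have "(\<Sum>X\<in>sample_space N n. \<Prod>l<n. \<Prod>j<N. f l j (X l j))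
      = (\<Sum>h\<in>PiE ?I (\<lambda>_. UNIV). \<Prod>l<n. \<Prod>j<N. f l j (emb N n h l j))"
    unfolding S_image by (rule sum.reindex[OF inj_emb, unfolded comp_def])
  also have "\<dots> = (\<Sum>h\<in>PiE ?I (\<lambda>_. UNIV). \<Prod>x\<in>?I. f (fst x) (snd x) (h x))"
    by (intro sum.cong refl) (simp add: emb_def prod.cartesian_product case_prod_beta')
  also have "\<dots> = (\<Prod>x\<in>?I. \<Sum>b\<in>UNIV. f (fst x) (snd x) b)"
    by (rule prod_sum_PiE[symmetric]) auto
  also have "\<dots> = (\<Prod>l<n. \<Prod>j<N. f l j True + f l j False)"
    by (simp add: sum_UNIV_bool prod.cartesian_product case_prod_beta')
  finally show ?thesis .
qed

lemma key_E:
  fixes h :: "nat \<Rightarrow> bool \<Rightarrow> real"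
  shows "(\<Sum>e\<in>PiE {..<N} (\<lambda>_. UNIV). \<Prod>j<N. h j (e j)) = (\<Prod>j<N. h j True + h j False)"
  by (subst prod_sum_PiE[symmetric]) (auto simp: sum_UNIV_bool)

lemma card_E: "card (PiE {..<N} (\<lambda>_. UNIV :: bool set)) = 2 ^ N"
  by (simp add: card_PiE)

definition sg :: "bool \<Rightarrow> real" where "sg b = (if b then 1 else -1)"
definition EE :: "nat \<Rightarrow> (nat \<Rightarrow> bool) set" where "EE N = PiE {..<N} (\<lambda>_. UNIV)"
definition qe :: "(nat \<Rightarrow> real) \<Rightarrow> (nat \<Rightarrow> real) \<Rightarrow> (nat \<Rightarrow> bool) \<Rightarrow> nat \<Rightarrow> real" where
  "qe p \<gamma> e = (\<lambda>j. p j + sg (e j) * \<gamma> j)"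
definition aa :: "(nat \<Rightarrow> real) \<Rightarrow> (nat \<Rightarrow> real) \<Rightarrow> nat \<Rightarrow> real" where
  "aa p \<gamma> j = \<gamma> j ^ 2 / (p j * (1 - p j))"

lemma finite_EE: "finite (EE N)" by (simp add: EE_def finite_PiE)
lemma card_EE: "card (EE N) = 2 ^ N" by (simp add: EE_def card_PiE)

lemma total_prob: "(\<Sum>X\<in>sample_space N n. sample_prob N n q X) = 1"
  unfolding sample_prob_def
  using key_S[of "\<lambda>l j b. if b then q j else 1 - q j" N n] by simp

lemma sample_prob_nonneg: "(\<forall>j<N. 0 \<le> q j \<and> q j \<le> 1) \<Longrightarrow> 0 \<le> sample_prob N n q X"
  unfolding sample_prob_def by (intro prod_nonneg) auto

lemma factor_id:
  fixes p g :: real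
  assumes "0 \<le> p" "p < 1" "p = 0 \<Longrightarrow> g = 0" "s1 = 1 \<or> s1 = -1" "s2 = 1 \<or> s2 = -1"
  shows "(p + s1 * g)*(p + s2 * g)/p + (1 - (p + s1 * g))*(1 - (p + s2 * g))/(1-p) = 1 + s1 * s2*(g^2/(p*(1-p)))"
proof (cases "p = 0")
  case True then show ?thesis using assms by simp
next
  case False
  then have "p > 0" "1 - p > 0" using assms by auto
  then show ?thesis by (simp add: field_simps power2_eq_square)
qed

lemma cosh_like:
  fixes a :: real
  assumes "0 \<le> a" "a \<le> 1" "real n * a \<le> 1"
  shows "((1+a)^n + (1-a)^n)/2 \<le> 1 + (real n * a)^2"
proof -
  define x where "x = real n * a"
  have x0: "0 \<le> x" "x \<le> 1" using assms by (auto simp: x_def)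
  have "(1+a)^n \<le> exp a ^ n"
    by (rule power_mono) (use assms in \<open>auto simp: exp_ge_add_one_self add.commute\<close>)
  also have "\<dots> = exp x" by (simp add: x_def exp_of_nat_mult)
  also have "\<dots> \<le> 1 + x + x^2" using exp_bound x0 by simp
  finally have 1: "(1+a)^n \<le> 1 + x + x^2" .
  have "(1-a)^n \<le> exp (-a) ^ n"
    by (rule power_mono) (use assms exp_ge_add_one_self[of "-a"] in auto)
  also have "\<dots> = exp (-x)" by (simp add: x_def exp_of_nat_mult[symmetric])
  also have "\<dots> = 1 / exp x" by (simp add: exp_minus field_simps)
  also have "\<dots> \<le> 1 / (1 + x)"
    using x0 by (intro divide_left_mono) (auto simp: exp_ge_add_one_self add.commute intro: add_pos_nonneg)
  also have "\<dots> \<le> 1 - x + x^2"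
  proof -
    have "1 \<le> (1 - x + x^2) * (1 + x)" using x0 by (simp add: algebra_simps power2_eq_square power3_eq_cube)
    then show ?thesis using x0 by (simp add: field_simps)
  qed
  finally have 2: "(1-a)^n \<le> 1 - x + x^2" .
  from 1 2 show ?thesis by (simp add: x_def[symmetric])
qed


lemma sg_cases: "sg b = 1 \<or> sg b = -1" by (simp add: sg_def)

context
  fixes N n :: nat and p \<gamma> :: "nat \<Rightarrow> real"
  assumes hp: "\<forall>j<N. 0 \<le> p j \<and> p j \<le> 1/2" and hg: "\<forall>i<N. 0 \<le> \<gamma> i \<and> \<gamma> i \<le> p i"
begin

lemma pair_sum:
  "(\<Sum>X\<in>sample_space N n. sample_prob N n (qe p \<gamma> e) X * sample_prob N n (qe p \<gamma> e') X / sample_prob N n p X)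
   = (\<Prod>j<N. (1 + sg (e j) * sg (e' j) * aa p \<gamma> j) ^ n)"
proof -
  let ?q1 = "qe p \<gamma> e" and ?q2 = "qe p \<gamma> e'"
  define f where "f (l::nat) (j::nat) b = (if b then ?q1 j else 1 - ?q1 j) * (if b then ?q2 j else 1 - ?q2 j) / (if b then p j else 1 - p j)" for l j b
  have "(\<Sum>X\<in>sample_space N n. sample_prob N n ?q1 X * sample_prob N n ?q2 X / sample_prob N n p X)
      = (\<Sum>X\<in>sample_space N n. \<Prod>l<n. \<Prod>j<N. f l j (X l j))"
    by (intro sum.cong refl) (simp add: sample_prob_def f_def prod_dividef prod.distrib)
  also have "\<dots> = (\<Prod>l<n. \<Prod>j<N. f l j True + f l j False)" by (rule key_S)
  also have "\<dots> = (\<Prod>l<n. \<Prod>j<N. 1 + sg (e j) * sg (e' j) * aa p \<gamma> j)"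
  proof (intro prod.cong refl)
    fix l j assume j: "j \<in> {..<N}"
    have "p j = 0 \<Longrightarrow> \<gamma> j = 0" using hg j by force
    have "f l j True + f l j False = (p j + sg (e j) * \<gamma> j) * (p j + sg (e' j) * \<gamma> j) / p j
       + (1 - (p j + sg (e j) * \<gamma> j)) * (1 - (p j + sg (e' j) * \<gamma> j)) / (1 - p j)"
      by (simp add: f_def qe_def)
    also have "\<dots> = 1 + sg (e j) * sg (e' j) * aa p \<gamma> j"
      unfolding aa_def using hp j sg_cases \<open>p j = 0 \<Longrightarrow> \<gamma> j = 0\<close>
      by (intro factor_id[of "p j" "\<gamma> j"]) auto
    finally show "f l j True + f l j False = 1 + sg (e j) * sg (e' j) * aa p \<gamma> j" .
  qed
  also have "\<dots> = (\<Prod>j<N. (1 + sg (e j) * sg (e' j) * aa p \<gamma> j) ^ n)"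
    by (simp add: prod_power_distrib)
  finally show ?thesis .
qed

lemma sum_e:
  "(\<Sum>e\<in>EE N. \<Prod>j<N. (1 + sg (e j) * sg (e' j) * aa p \<gamma> j) ^ n)
   = (\<Prod>j<N. (1 + aa p \<gamma> j) ^ n + (1 - aa p \<gamma> j) ^ n)"
proof -
  have "(\<Sum>e\<in>EE N. \<Prod>j<N. (1 + sg (e j) * sg (e' j) * aa p \<gamma> j) ^ n)
      = (\<Prod>j<N. (1 + sg True * sg (e' j) * aa p \<gamma> j) ^ n + (1 + sg False * sg (e' j) * aa p \<gamma> j) ^ n)"
    unfolding EE_def by (rule key_E)
  also have "\<dots> = (\<Prod>j<N. (1 + aa p \<gamma> j) ^ n + (1 - aa p \<gamma> j) ^ n)"
    by (intro prod.cong refl) (auto simp: sg_def)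
  finally show ?thesis .
qed

definition MM :: "(nat \<Rightarrow> nat \<Rightarrow> bool) \<Rightarrow> real" where
  "MM X = (\<Sum>e\<in>EE N. sample_prob N n (qe p \<gamma> e) X) / 2 ^ N"

lemma chi_sum:
  "(\<Sum>X\<in>sample_space N n. MM X ^ 2 / sample_prob N n p X)
   = (\<Prod>j<N. ((1 + aa p \<gamma> j) ^ n + (1 - aa p \<gamma> j) ^ n) / 2)"
proof -
  let ?P = "sample_prob N n p" and ?Q = "\<lambda>e. sample_prob N n (qe p \<gamma> e)"
  let ?B = "(\<Prod>j<N. (1 + aa p \<gamma> j) ^ n + (1 - aa p \<gamma> j) ^ n)"
  have "\<And>X. MM X ^ 2 / ?P X = (\<Sum>e\<in>EE N. \<Sum>e'\<in>EE N. ?Q e X * ?Q e' X / ?P X) / (2 ^ N) ^ 2"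
    by (simp add: MM_def power2_eq_square sum_product sum_divide_distrib)
      (simp add: mult.commute)
  then have "(\<Sum>X\<in>sample_space N n. MM X ^ 2 / ?P X)
     = (\<Sum>X\<in>sample_space N n. \<Sum>e\<in>EE N. \<Sum>e'\<in>EE N. ?Q e X * ?Q e' X / ?P X) / (2 ^ N) ^ 2"
    by (simp add: sum_divide_distrib)
  also have "(\<Sum>X\<in>sample_space N n. \<Sum>e\<in>EE N. \<Sum>e'\<in>EE N. ?Q e X * ?Q e' X / ?P X)
     = (\<Sum>e'\<in>EE N. \<Sum>e\<in>EE N. \<Sum>X\<in>sample_space N n. ?Q e X * ?Q e' X / ?P X)"
  proof -
    have "(\<Sum>X\<in>sample_space N n. \<Sum>e\<in>EE N. \<Sum>e'\<in>EE N. ?Q e X * ?Q e' X / ?P X)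
       = (\<Sum>e\<in>EE N. \<Sum>X\<in>sample_space N n. \<Sum>e'\<in>EE N. ?Q e X * ?Q e' X / ?P X)"
      by (rule sum.swap)
    also have "\<dots> = (\<Sum>e\<in>EE N. \<Sum>e'\<in>EE N. \<Sum>X\<in>sample_space N n. ?Q e X * ?Q e' X / ?P X)"
      by (intro sum.cong refl) (rule sum.swap)
    also have "\<dots> = (\<Sum>e'\<in>EE N. \<Sum>e\<in>EE N. \<Sum>X\<in>sample_space N n. ?Q e X * ?Q e' X / ?P X)"
      by (rule sum.swap)
    finally show ?thesis .
  qed
  also have "\<dots> = (\<Sum>e'\<in>EE N. ?B)"
    by (simp add: pair_sum sum_e)
  also have "\<dots> = 2 ^ N * ?B" by (simp add: card_EE)
  also have "2 ^ N * ?B / (2 ^ N) ^ 2 = ?B / 2 ^ N" by (simp add: power2_eq_square)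
  also have "\<dots> = (\<Prod>j<N. ((1 + aa p \<gamma> j) ^ n + (1 - aa p \<gamma> j) ^ n) / 2)"
    by (simp add: prod_dividef)
  finally show ?thesis .
qed


lemma qe_valid: "\<forall>j<N. 0 \<le> qe p \<gamma> e j \<and> qe p \<gamma> e j \<le> 1"
proof (intro allI impI)
  fix j assume j: "j < N"
  then show "0 \<le> qe p \<gamma> e j \<and> qe p \<gamma> e j \<le> 1"
  proof -
    have a: "0 \<le> p j" "p j \<le> 1/2" "0 \<le> \<gamma> j" "\<gamma> j \<le> p j" using hp hg j by auto
    show ?thesis using sg_cases[of "e j"] a by (auto simp: qe_def)
  qed
qed

lemma P_zero: "sample_prob N n p X = 0 \<Longrightarrow> sample_prob N n (qe p \<gamma> e) X = 0"
proof -
  assume "sample_prob N n p X = 0"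
  then obtain l j where l: "l < n" and j: "j < N" and z: "(if X l j then p j else 1 - p j) = 0"
    unfolding sample_prob_def by (auto simp: prod_zero_iff)
  have "X l j \<and> p j = 0" using z hp j by (auto split: if_splits)
  moreover then have "\<gamma> j = 0" using hg j by force
  ultimately have "(if X l j then qe p \<gamma> e j else 1 - qe p \<gamma> e j) = 0" by (simp add: qe_def)
  then have z2: "(if X l j then qe p \<gamma> e j else 1 - qe p \<gamma> e j) = 0" .
  have z3: "(\<Prod>j<N. if X l j then qe p \<gamma> e j else 1 - qe p \<gamma> e j) = 0"
    apply (rule prod_zero)
     apply simp
    apply (rule bexI[where x=j])
     apply (rule z2)
    apply (simp add: j)
    done
  show ?thesis unfolding sample_prob_def
    apply (rule prod_zero)
     apply simp
    apply (rule bexI[where x=l])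
     apply (rule z3)
    apply (simp add: l)
    done
qed

lemma MM_zero: "sample_prob N n p X = 0 \<Longrightarrow> MM X = 0"
  by (simp add: MM_def P_zero)

lemma MM_nonneg: "0 \<le> MM X"
  unfolding MM_def by (intro divide_nonneg_pos sum_nonneg sample_prob_nonneg qe_valid) auto

lemma P_nonneg: "0 \<le> sample_prob N n p X"
  using hp by (intro sample_prob_nonneg) auto

lemma sum_MM: "(\<Sum>X\<in>sample_space N n. MM X) = 1"
proof -
  have "(\<Sum>X\<in>sample_space N n. MM X) = (\<Sum>X\<in>sample_space N n. \<Sum>e\<in>EE N. sample_prob N n (qe p \<gamma> e) X) / 2 ^ N"
    by (simp add: MM_def sum_divide_distrib)
  also have "(\<Sum>X\<in>sample_space N n. \<Sum>e\<in>EE N. sample_prob N n (qe p \<gamma> e) X) = (\<Sum>e\<in>EE N. \<Sum>X\<in>sample_space N n. sample_prob N n (qe p \<gamma> e) X)"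
    by (rule sum.swap)
  also have "\<dots> = 2 ^ N" by (simp add: total_prob card_EE)
  finally show ?thesis by simp
qed

lemma pointwise:
  fixes x y c :: real
  assumes "0 \<le> y" "y = 0 \<Longrightarrow> x = 0" "0 < c"
  shows "\<bar>x - y\<bar> \<le> ((x^2/y - 2*x + y)/c + c*y)/2"
proof (cases "y = 0")
  case True then show ?thesis using assms by simp
next
  case False
  then have y: "y > 0" using assms by auto
  have "0 \<le> (\<bar>x - y\<bar> - y*c)^2" by simp
  then have "2*\<bar>x - y\<bar>*(y*c) \<le> (x-y)^2 + (y*c)^2"
    by (simp add: power2_eq_square algebra_simps abs_mult_self_eq)
  moreover have "((x^2/y - 2*x + y)/c + c*y)/2 = ((x-y)^2 + (y*c)^2)/(2*(y*c))"
    using y assms by (simp add: field_simps power2_eq_square)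
  ultimately show ?thesis using y assms by (simp add: field_simps)
qed

lemma tv_bound:
  assumes c: "0 < c" and chi: "(\<Sum>X\<in>sample_space N n. MM X ^ 2 / sample_prob N n p X) \<le> 1 + c^2"
  shows "(\<Sum>X\<in>sample_space N n. \<bar>MM X - sample_prob N n p X\<bar>) \<le> c"
proof -
  let ?S = "sample_space N n" and ?P = "sample_prob N n p"
  have "(\<Sum>X\<in>?S. \<bar>MM X - ?P X\<bar>) \<le> (\<Sum>X\<in>?S. ((MM X^2/?P X - 2*MM X + ?P X)/c + c*?P X)/2)"
    by (intro sum_mono pointwise P_nonneg MM_zero c)
  also have "\<dots> = (((\<Sum>X\<in>?S. MM X^2/?P X) - 2*(\<Sum>X\<in>?S. MM X) + (\<Sum>X\<in>?S. ?P X))/c + c*(\<Sum>X\<in>?S. ?P X))/2"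
  proof -
    have eq: "((MM X^2/?P X - 2*MM X + ?P X)/c + c*?P X)/2
       = (MM X^2/?P X) * (1/(2*c)) + MM X * (-1/c) + ?P X * (1/(2*c) + c/2)" for X
      using c by (simp add: field_simps)
    have "(\<Sum>X\<in>?S. ((MM X^2/?P X - 2*MM X + ?P X)/c + c*?P X)/2)
      = (\<Sum>X\<in>?S. MM X^2/?P X) * (1/(2*c)) + (\<Sum>X\<in>?S. MM X) * (-1/c) + (\<Sum>X\<in>?S. ?P X) * (1/(2*c) + c/2)"
      by (simp only: eq sum.distrib sum_distrib_right[symmetric])
    also have "\<dots> = (((\<Sum>X\<in>?S. MM X^2/?P X) - 2*(\<Sum>X\<in>?S. MM X) + (\<Sum>X\<in>?S. ?P X))/c + c*(\<Sum>X\<in>?S. ?P X))/2"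
      using c by (simp add: field_simps)
    finally show ?thesis .
  qed
  also have "\<dots> = (((\<Sum>X\<in>?S. MM X^2/?P X) - 1)/c + c)/2"
    by (simp add: sum_MM total_prob)
  also have "\<dots> \<le> ((c^2)/c + c)/2"
    using chi c by (intro divide_right_mono add_right_mono) auto
  also have "\<dots> = c" using c by (simp add: power2_eq_square)
  finally show ?thesis .
qed

lemma test_false: "test_prob N n q psi False = 1 - test_prob N n q psi True"
proof -
  have "test_prob N n q psi False + test_prob N n q psi True = (\<Sum>X\<in>sample_space N n. sample_prob N n q X)"
    unfolding test_prob_def by (subst sum.distrib[symmetric]) (intro sum.cong refl, auto)
  then show ?thesis by (simp add: total_prob)
qed

lemma risk_bound:
  assumes c: "0 < c" and chi: "(\<Sum>X\<in>sample_space N n. MM X ^ 2 / sample_prob N n p X) \<le> 1 + c^2"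
    and rho: "\<rho> \<le> tnorm N t \<gamma>"
  shows "risk N n t p \<rho> psi \<ge> 1 - c"
proof -
  let ?S = "sample_space N n" and ?P = "sample_prob N n p"
  let ?A = "{q. (\<forall>j<N. 0 \<le> q j \<and> q j \<le> 1) \<and> tnorm N t (\<lambda>j. p j - q j) \<ge> \<rho>}"
  let ?f = "\<lambda>q. test_prob N n q psi False"
  have mem: "qe p \<gamma> e \<in> ?A" for e
  proof -
    have "tnorm N t (\<lambda>j. p j - qe p \<gamma> e j) = tnorm N t \<gamma>"
      unfolding tnorm_def
    proof (intro arg_cong[where f="\<lambda>x. x powr (1/t)"] sum.cong refl)
      fix j assume "j \<in> {..<N}"
      then show "\<bar>p j - qe p \<gamma> e j\<bar> powr t = \<bar>\<gamma> j\<bar> powr t"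
        using sg_cases[of "e j"] by (auto simp: qe_def)
    qed
    then show ?thesis using qe_valid rho by auto
  qed
  have bdd: "bdd_above (?f ` ?A)"
  proof (rule bdd_aboveI2)
    fix q assume q: "q \<in> ?A"
    have "?f q \<le> (\<Sum>X\<in>?S. sample_prob N n q X)"
      unfolding test_prob_def using q by (intro sum_mono) (auto intro: sample_prob_nonneg)
    then show "?f q \<le> 1" by (simp add: total_prob)
  qed
  have "(\<Sum>e\<in>EE N. ?f (qe p \<gamma> e)) \<le> (\<Sum>e\<in>EE N. (SUP q\<in>?A. ?f q))"
    by (intro sum_mono cSUP_upper mem bdd)
  then have avg: "(\<Sum>e\<in>EE N. ?f (qe p \<gamma> e)) / 2 ^ N \<le> (SUP q\<in>?A. ?f q)"
  proof -
    assume h: "(\<Sum>e\<in>EE N. ?f (qe p \<gamma> e)) \<le> (\<Sum>e\<in>EE N. (SUP q\<in>?A. ?f q))"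
    have "(\<Sum>e\<in>EE N. (SUP q\<in>?A. ?f q)) = 2 ^ N * (SUP q\<in>?A. ?f q)" by (simp add: card_EE)
    then show ?thesis using h by (simp add: pos_divide_le_eq mult.commute card_EE)
  qed
  have "(\<Sum>e\<in>EE N. test_prob N n (qe p \<gamma> e) psi True) / 2 ^ N
      = (\<Sum>X\<in>?S. (\<Sum>e\<in>EE N. if psi X = True then sample_prob N n (qe p \<gamma> e) X else 0)) / 2 ^ N"
    unfolding test_prob_def by (subst sum.swap) (rule refl)
  also have "\<dots> = (\<Sum>X\<in>?S. if psi X then MM X else 0)"
    unfolding sum_divide_distrib MM_def by (intro sum.cong refl) auto
  finally have eqT: "(\<Sum>e\<in>EE N. test_prob N n (qe p \<gamma> e) psi True) / 2 ^ N = (\<Sum>X\<in>?S. if psi X then MM X else 0)" .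
  have "(\<Sum>e\<in>EE N. ?f (qe p \<gamma> e)) / 2 ^ N = (\<Sum>e\<in>EE N. 1 - test_prob N n (qe p \<gamma> e) psi True) / 2 ^ N"
    by (simp add: test_false)
  also have "\<dots> = 1 - (\<Sum>e\<in>EE N. test_prob N n (qe p \<gamma> e) psi True) / 2 ^ N"
    by (simp add: sum_subtractf card_EE diff_divide_distrib)
  finally have avgeq: "(\<Sum>e\<in>EE N. ?f (qe p \<gamma> e)) / 2 ^ N = 1 - (\<Sum>X\<in>?S. if psi X then MM X else 0)"
    using eqT by simp
  have "(\<Sum>X\<in>?S. if psi X then MM X else 0) - test_prob N n p psi True
      = (\<Sum>X\<in>?S. if psi X then MM X - ?P X else 0)"
    unfolding test_prob_def by (subst sum_subtractf[symmetric]) (intro sum.cong refl, auto)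
  also have "\<dots> \<le> (\<Sum>X\<in>?S. \<bar>MM X - ?P X\<bar>)"
    by (intro sum_mono) auto
  also have "\<dots> \<le> c" by (rule tv_bound[OF c chi])
  finally have "(\<Sum>X\<in>?S. if psi X then MM X else 0) - test_prob N n p psi True \<le> c" .
  then show ?thesis unfolding risk_def using avg avgeq by linarith
qed


lemma aa_bounds: assumes "j < N" shows "0 \<le> aa p \<gamma> j" "aa p \<gamma> j \<le> 1"
proof -
  have a: "0 \<le> p j" "p j \<le> 1/2" "0 \<le> \<gamma> j" "\<gamma> j \<le> p j" using hp hg assms by auto
  show "0 \<le> aa p \<gamma> j" unfolding aa_def using a by (intro divide_nonneg_nonneg) auto
  show "aa p \<gamma> j \<le> 1"
  proof (cases "p j = 0")
    case True then show ?thesis by (simp add: aa_def)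
  next
    case False
    then have pp: "0 < p j * (1 - p j)" using a by (auto intro: mult_pos_pos)
    have "\<gamma> j ^ 2 \<le> p j ^ 2" using a by (intro power_mono) auto
    also have "\<dots> \<le> p j * (1 - p j)" using a by (simp add: power2_eq_square mult_left_mono)
    finally show ?thesis unfolding aa_def using pp by simp
  qed
qed

lemma chi_le:
  assumes "\<forall>j<N. real n * aa p \<gamma> j \<le> 1"
  shows "(\<Sum>X\<in>sample_space N n. MM X ^ 2 / sample_prob N n p X) \<le> exp (\<Sum>j<N. (real n * aa p \<gamma> j)^2)"
proof -
  have "(\<Prod>j<N. ((1 + aa p \<gamma> j) ^ n + (1 - aa p \<gamma> j) ^ n) / 2) \<le> (\<Prod>j<N. exp ((real n * aa p \<gamma> j)^2))"
  proof (intro prod_mono conjI)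
    fix j assume "j \<in> {..<N}"
    then have j: "j < N" by simp
    note b = aa_bounds[OF j]
    show "0 \<le> ((1 + aa p \<gamma> j) ^ n + (1 - aa p \<gamma> j) ^ n) / 2"
      by (intro divide_nonneg_pos add_nonneg_nonneg zero_le_power) (use b in auto)
    have "((1 + aa p \<gamma> j) ^ n + (1 - aa p \<gamma> j) ^ n) / 2 \<le> 1 + (real n * aa p \<gamma> j)^2"
    proof (rule cosh_like)
      show "0 \<le> aa p \<gamma> j" "aa p \<gamma> j \<le> 1" using b by auto
      show "real n * aa p \<gamma> j \<le> 1" using assms j by blast
    qed
    also have "\<dots> \<le> exp ((real n * aa p \<gamma> j)^2)"
      using exp_ge_add_one_self[of "(real n * aa p \<gamma> j)^2"] by linarith
    finally show "((1 + aa p \<gamma> j) ^ n + (1 - aa p \<gamma> j) ^ n) / 2 \<le> exp ((real n * aa p \<gamma> j)^2)" .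
  qed
  then show ?thesis unfolding chi_sum exp_sum[OF finite_lessThan] .
qed

lemma sum_aa:
  "(\<Sum>j<N. (real n * aa p \<gamma> j)^2) \<le> 4 * real n ^ 2 * (\<Sum>i\<in>{i. i < N \<and> 0 < p i}. \<gamma> i ^ 4 / p i ^ 2)"
proof -
  let ?F = "{i. i < N \<and> 0 < p i}"
  have "(\<Sum>j<N. (real n * aa p \<gamma> j)^2) = (\<Sum>j\<in>?F. (real n * aa p \<gamma> j)^2)"
  proof (rule sum.mono_neutral_right)
    show "\<forall>i\<in>{..<N} - ?F. (real n * aa p \<gamma> i)\<^sup>2 = 0"
    proof
      fix i assume "i \<in> {..<N} - ?F"
      then have "p i = 0" using hp by force
      then show "(real n * aa p \<gamma> i)\<^sup>2 = 0" by (simp add: aa_def)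
    qed
  qed auto
  also have "\<dots> \<le> (\<Sum>j\<in>?F. 4 * real n ^ 2 * (\<gamma> j ^ 4 / p j ^ 2))"
  proof (rule sum_mono)
    fix j assume "j \<in> ?F"
    then have j: "j < N" "0 < p j" by auto
    have a: "p j \<le> 1/2" using hp j by auto
    have q: "p j ^ 2 / 4 \<le> (p j * (1 - p j))^2"
    proof -
      have "p j * p j \<le> p j * (1/2)" using a j by (intro mult_left_mono) auto
      then have "p j / 2 \<le> p j * (1 - p j)" by (simp add: algebra_simps)
      then have "(p j / 2)^2 \<le> (p j * (1 - p j))^2" using j by (intro power_mono) auto
      then show ?thesis by (simp add: power2_eq_square)
    qed
    have "aa p \<gamma> j ^ 2 = \<gamma> j ^ 4 / (p j * (1 - p j))^2"
      by (simp add: aa_def power_divide flip: power_mult)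
    also have "\<dots> \<le> \<gamma> j ^ 4 / (p j ^ 2 / 4)"
    proof -
      have "0 < 1 - p j" using a by simp
      then have "0 < (p j * (1 - p j))^2 * (p j)^2" using j by simp
      then show ?thesis using j q by (intro divide_left_mono) auto
    qed
    also have "\<dots> = 4 * (\<gamma> j ^ 4 / p j ^ 2)" by simp
    finally have "aa p \<gamma> j ^ 2 \<le> 4 * (\<gamma> j ^ 4 / p j ^ 2)" .
    then show "(real n * aa p \<gamma> j)^2 \<le> 4 * real n ^ 2 * (\<gamma> j ^ 4 / p j ^ 2)"
    proof -
      assume h: "aa p \<gamma> j ^ 2 \<le> 4 * (\<gamma> j ^ 4 / p j ^ 2)"
      have "(real n * aa p \<gamma> j)^2 = real n ^ 2 * aa p \<gamma> j ^ 2" by (simp add: power_mult_distrib)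
      also have "\<dots> \<le> real n ^ 2 * (4 * (\<gamma> j ^ 4 / p j ^ 2))" using h by (intro mult_left_mono) auto
      finally show ?thesis by (simp only: mult_ac)
    qed
  qed
  also have "\<dots> = 4 * real n ^ 2 * (\<Sum>i\<in>?F. \<gamma> i ^ 4 / p i ^ 2)"
    by (simp add: sum_distrib_left)
  finally show ?thesis .
qed

end


theorem lemmaA2:
  fixes \<eta> :: real
  assumes "0 < \<eta>" and "\<eta> < 1"
  shows "\<exists>L>0. \<forall>(N::nat) (n::nat) (t::real) (p::nat \<Rightarrow> real) (\<gamma>::nat \<Rightarrow> real) (\<rho>::real).
     2 \<le> N \<longrightarrow> 2 \<le> n \<longrightarrow> even n \<longrightarrow> 1 \<le> t \<longrightarrow> t \<le> 2 \<longrightarrow>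
     (\<forall>j<N. 0 \<le> p j \<and> p j \<le> 1 / 2) \<longrightarrow>
     (\<forall>i<N. 0 \<le> \<gamma> i \<and> \<gamma> i \<le> p i) \<longrightarrow>
     (\<Sum>i\<in>{i. i < N \<and> 0 < p i}. \<gamma> i ^ 4 / p i ^ 2) \<le> L / real n ^ 2 \<longrightarrow>
     \<rho> \<le> tnorm N t \<gamma> \<longrightarrow>
     minimax_risk N n t p \<rho> \<ge> \<eta>"
proof -
  define c where "c = 1 - \<eta>"
  have c: "0 < c" using assms by (simp add: c_def)
  define L where "L = min (1/4) (ln (1 + c^2) / 4)"
  have lnpos: "0 < ln (1 + c^2)" using c by (simp add: ln_gt_zero)
  have L0: "0 < L" using lnpos by (simp add: L_def)
  have L1: "4 * L \<le> 1" by (simp add: L_def)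
  have L2: "exp (4 * L) \<le> 1 + c^2"
  proof -
    have "4 * L \<le> ln (1 + c^2)" by (simp add: L_def)
    then have "exp (4 * L) \<le> exp (ln (1 + c^2))" by simp
    also have "\<dots> = 1 + c^2" using c by (simp add: add_pos_nonneg)
    finally show ?thesis .
  qed
  show ?thesis
  proof (intro exI[of _ L] conjI allI impI L0)
    fix N n :: nat and t :: real and p \<gamma> :: "nat \<Rightarrow> real" and \<rho> :: real
    assume n2: "2 \<le> n" and hp: "\<forall>j<N. 0 \<le> p j \<and> p j \<le> 1 / 2" and hg: "\<forall>i<N. 0 \<le> \<gamma> i \<and> \<gamma> i \<le> p i"
      and hs: "(\<Sum>i\<in>{i. i < N \<and> 0 < p i}. \<gamma> i ^ 4 / p i ^ 2) \<le> L / real n ^ 2"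
      and rho: "\<rho> \<le> tnorm N t \<gamma>"
    have npos: "0 < real n ^ 2" using n2 by simp
    have "(\<Sum>j<N. (real n * aa p \<gamma> j)^2) \<le> 4 * real n ^ 2 * (\<Sum>i\<in>{i. i < N \<and> 0 < p i}. \<gamma> i ^ 4 / p i ^ 2)"
      by (rule sum_aa[OF hp hg])
    also have "\<dots> \<le> 4 * real n ^ 2 * (L / real n ^ 2)"
      by (rule mult_left_mono[OF hs]) simp
    also have "\<dots> = 4 * L" using npos by simp
    finally have sa: "(\<Sum>j<N. (real n * aa p \<gamma> j)^2) \<le> 4 * L" .
    have small: "\<forall>j<N. real n * aa p \<gamma> j \<le> 1"
    proof (intro allI impI)
      fix j assume j: "j < N"
      have "(real n * aa p \<gamma> j)^2 \<le> (\<Sum>j<N. (real n * aa p \<gamma> j)^2)"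
        by (rule member_le_sum) (use j in auto)
      then have sq: "(real n * aa p \<gamma> j)^2 \<le> 1^2" using sa L1 by simp
      show "real n * aa p \<gamma> j \<le> 1" by (rule power2_le_imp_le[OF sq]) simp
    qed
    have "(\<Sum>X\<in>sample_space N n. MM N n p \<gamma> X ^ 2 / sample_prob N n p X) \<le> exp (\<Sum>j<N. (real n * aa p \<gamma> j)^2)"
      by (rule chi_le[OF hp hg small])
    also have "\<dots> \<le> exp (4 * L)" using sa by simp
    also have "\<dots> \<le> 1 + c^2" by (rule L2)
    finally have chi: "(\<Sum>X\<in>sample_space N n. MM N n p \<gamma> X ^ 2 / sample_prob N n p X) \<le> 1 + c^2" .
    have "\<forall>psi. \<eta> \<le> risk N n t p \<rho> psi"
    proof
      fix psi
      have "1 - c \<le> risk N n t p \<rho> psi" by (rule risk_bound[OF hp hg c chi rho])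
      then show "\<eta> \<le> risk N n t p \<rho> psi" by (simp add: c_def)
    qed
    then show "\<eta> \<le> minimax_risk N n t p \<rho>"
      unfolding minimax_risk_def by (intro cINF_greatest) auto
  qed
qed

end
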